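(* Let $(V,\nu)$ be a gauged space. Let $V_1=V\oplus\mathbb{R}$ (algebraic direct sum) and define $\nu_1(x,\lambda)=\max\{\nu(x)+\lambda,0\}$. Then $(V_1,\nu_1)$ is a gauged space and $\nu_1(x,0)=\nu(x)$ for all $x\in V$; consequently $x\mapsto(x,0)$ is an isometric order embedding of $(V,\|\cdot\|_\nu,V_{+,\nu})$ into $(V_1,\|\cdot\|_{\nu_1},(V_1)_{+})$, where $(V_1)_+=\ker\overline{\nu_1}$. Moreover, $(V_1,(V_1)_+)$ is an Archimedean order unit space with order unit $e=(0,1)$, and $\nu_1(x,\lambda)=\inf\{t>0:(x,\lambda)\le t(0,1)\}$ for all $(x,\lambda)\in V_1$.
   Context: A gauge on a real vector space $V$ is a map $\nu:V\to[0,\infty)$ with $\nu(x+y)\le\nu(x)+\nu(y)$ and $\nu(tx)=t\nu(x)$ for all $x,y\in V$, $t>0$; its conjugate is $\overline{\nu}(x)=\nu(-x)$. A gauge is proper if for every $x\neq0$, $\nu(x)\neq0$ or $\overline{\nu}(x)\neq0$; a gauged space is a pair $(V,\nu)$ with $\nu$ a proper gauge. The induced norm is $\|x\|_\nu=\max\{\nu(x),\overline{\nu}(x)\}$ and the induced (proper, closed) cone is $V_{+,\nu}=\ker\overline{\nu}$; $x\le y$ means $y-x$ lies in the cone. An order embedding is an injective linear map $\phi$ with $\phi(x)\ge0$ iff $x\ge0$. An ordered vector space $(V,V_+)$ (real vector space with proper cone) is an order unit space with order unit $e$ if for each $a\in V$ there is $t>0$ with $-te\le a\le te$; the order unit is Archimedean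 if ($te+a\ge0$ for all $t>0$) implies $a\ge 0$; an Archimedean order unit (AOU) space is an order unit space with Archimedean order unit. *)

theory Defs
  imports "HOL-Analysis.Analysis"
begin

definition gauge :: "('a::real_vector \<Rightarrow> real) \<Rightarrow> bool" where
  "gauge \<nu> \<longleftrightarrow> (\<forall>x. 0 \<le> \<nu> x) \<and> (\<forall>x y. \<nu> (x + y) \<le> \<nu> x + \<nu> y)
     \<and> (\<forall>t x. t > 0 \<longrightarrow> \<nu> (t *\<^sub>R x) = t * \<nu> x)"

definition conj_gauge :: "('a::real_vector \<Rightarrow> real) \<Rightarrow> 'a \<Rightarrow> real" where
  "conj_gauge \<nu> x = \<nu> (- x)"

definition proper_gauge :: "('a::real_vector \<Rightarrow> real) \<Rightarrow> bool" where
  "proper_gauge \<nu> \<longleftrightarrow> gauge \<nu> \<and> (\<forall>x. x \<noteq> 0 \<longrightarrow> \<nu> x \<noteq> 0 \<or> conj_gauge \<nu> x \<noteq> 0)"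

definition gauged_space :: "('a::real_vector \<Rightarrow> real) \<Rightarrow> bool" where
  "gauged_space \<nu> \<longleftrightarrow> proper_gauge \<nu>"

definition gauge_norm :: "('a::real_vector \<Rightarrow> real) \<Rightarrow> 'a \<Rightarrow> real" where
  "gauge_norm \<nu> x = max (\<nu> x) (conj_gauge \<nu> x)"

definition gauge_cone :: "('a::real_vector \<Rightarrow> real) \<Rightarrow> 'a set" where
  "gauge_cone \<nu> = {x. conj_gauge \<nu> x = 0}"

definition cone_le :: "'a::real_vector set \<Rightarrow> 'a \<Rightarrow> 'a \<Rightarrow> bool" where
  "cone_le C x y \<longleftrightarrow> y - x \<in> C"

definition order_embedding :: "'a::real_vector set \<Rightarrow> 'b::real_vector set \<Rightarrow> ('a \<Rightarrow> 'b) \<Rightarrow> bool" where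
  "order_embedding C D \<phi> \<longleftrightarrow> linear \<phi> \<and> inj \<phi> \<and>
     (\<forall>x. cone_le D 0 (\<phi> x) \<longleftrightarrow> cone_le C 0 x)"

definition proper_cone :: "'a::real_vector set \<Rightarrow> bool" where
  "proper_cone C \<longleftrightarrow> 0 \<in> C \<and> (\<forall>x\<in>C. \<forall>y\<in>C. x + y \<in> C) \<and>
     (\<forall>t x. 0 \<le> t \<longrightarrow> x \<in> C \<longrightarrow> t *\<^sub>R x \<in> C) \<and> (\<forall>x. x \<in> C \<longrightarrow> - x \<in> C \<longrightarrow> x = 0)"

definition ordered_vector_space :: "'a::real_vector set \<Rightarrow> bool" where
  "ordered_vector_space C \<longleftrightarrow> proper_cone C"

definition order_unit_space :: "'a::real_vector set \<Rightarrow> 'a \<Rightarrow> bool" where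
  "order_unit_space C e \<longleftrightarrow> ordered_vector_space C \<and>
     (\<forall>a. \<exists>t>0. cone_le C (- (t *\<^sub>R e)) a \<and> cone_le C a (t *\<^sub>R e))"

definition archimedean_unit :: "'a::real_vector set \<Rightarrow> 'a \<Rightarrow> bool" where
  "archimedean_unit C e \<longleftrightarrow> (\<forall>a. (\<forall>t>0. cone_le C 0 (t *\<^sub>R e + a)) \<longrightarrow> cone_le C 0 a)"

definition AOU_space :: "'a::real_vector set \<Rightarrow> 'a \<Rightarrow> bool" where
  "AOU_space C e \<longleftrightarrow> order_unit_space C e \<and> archimedean_unit C e"

end

theory Submission
  imports Defs
begin

theorem proposition2p12:
  fixes \<nu> :: "'a::real_vector \<Rightarrow> real"
    and \<nu>\<^sub>1 :: "'a \<times> real \<Rightarrow> real"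
  assumes "gauged_space \<nu>"
    and "\<And>x r. \<nu>\<^sub>1 (x, r) = max (\<nu> x + r) 0"
  shows "gauged_space \<nu>\<^sub>1
    \<and> (\<forall>x. \<nu>\<^sub>1 (x, 0) = \<nu> x)
    \<and> (order_embedding (gauge_cone \<nu>) (gauge_cone \<nu>\<^sub>1) (\<lambda>x. (x, 0)))
    \<and> (\<forall>x. gauge_norm \<nu>\<^sub>1 (x, 0) = gauge_norm \<nu> x)
    \<and> (AOU_space (gauge_cone \<nu>\<^sub>1) (0, 1))
    \<and> (\<forall>p. \<nu>\<^sub>1 p = Inf {t. t > 0 \<and> cone_le (gauge_cone \<nu>\<^sub>1) p (t *\<^sub>R (0, 1))})"
proof -
  note N1 = assms(2)
  have nn: "\<And>x. 0 \<le> \<nu> x" and sub: "\<And>x y. \<nu> (x + y) \<le> \<nu> x + \<nu> y"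
    and hom: "\<And>t x. t > 0 \<Longrightarrow> \<nu> (t *\<^sub>R x) = t * \<nu> x"
    and prp: "\<And>x. x \<noteq> 0 \<Longrightarrow> \<nu> x \<noteq> 0 \<or> \<nu> (-x) \<noteq> 0"
    using assms(1) unfolding gauged_space_def proper_gauge_def gauge_def conj_gauge_def by auto
  have z: "\<nu> 0 = 0" using hom[of 2 0] by simp
  have cone: "\<And>x r. (x, r) \<in> gauge_cone \<nu>\<^sub>1 \<longleftrightarrow> \<nu> (-x) \<le> r"
    unfolding gauge_cone_def conj_gauge_def by (auto simp: N1)
  have cone0: "\<And>x. x \<in> gauge_cone \<nu> \<longleftrightarrow> \<nu> (-x) = 0"
    unfolding gauge_cone_def conj_gauge_def by auto
  have A0: "\<forall>x. \<nu>\<^sub>1 (x, 0) = \<nu> x" using nn by (simp add: N1)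
  have G: "gauged_space \<nu>\<^sub>1"
    unfolding gauged_space_def proper_gauge_def gauge_def conj_gauge_def
  proof (intro conjI allI impI)
    fix p :: "'a \<times> real" show "0 \<le> \<nu>\<^sub>1 p" by (cases p) (simp add: N1)
  next
    fix p q :: "'a \<times> real"
    obtain x r y s where "p = (x,r)" "q = (y,s)" by (cases p, cases q)
    then show "\<nu>\<^sub>1 (p + q) \<le> \<nu>\<^sub>1 p + \<nu>\<^sub>1 q"
      using sub[of x y] by (simp add: N1)
  next
    fix t :: real and p :: "'a \<times> real" assume t: "t > 0"
    obtain x r where p: "p = (x,r)" by (cases p)
    have "max (t * \<nu> x + t * r) 0 = t * max (\<nu> x + r) 0"
      using t by (simp add: max_def distrib_left[symmetric] mult_le_0_iff)
    then show "\<nu>\<^sub>1 (t *\<^sub>R p) = t * \<nu>\<^sub>1 p" using hom[OF t] by (simp add: p N1)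
  next
    fix p :: "'a \<times> real" assume p0: "p \<noteq> 0"
    obtain x r where p: "p = (x,r)" by (cases p)
    show "\<nu>\<^sub>1 p \<noteq> 0 \<or> \<nu>\<^sub>1 (- p) \<noteq> 0"
    proof (rule ccontr)
      assume "\<not> ?thesis"
      then have "\<nu> x + r \<le> 0" "\<nu> (-x) - r \<le> 0" by (auto simp: p N1)
      then have "\<nu> x = 0" "\<nu> (-x) = 0" "r = 0" using nn[of x] nn[of "-x"] by auto
      then show False using prp[of x] p0 p by (auto simp: zero_prod_def)
    qed
  qed
  have OE: "order_embedding (gauge_cone \<nu>) (gauge_cone \<nu>\<^sub>1) (\<lambda>x. (x, 0))"
    unfolding order_embedding_def cone_le_def
  proof (intro conjI allI)
    show "linear (\<lambda>x::'a. (x, 0::real))"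
      by (rule linearI) (auto simp: scaleR_prod_def)
    show "inj (\<lambda>x::'a. (x, 0::real))" by (auto intro: injI)
    fix x :: 'a
    show "((x, 0) - 0 \<in> gauge_cone \<nu>\<^sub>1) = (x - 0 \<in> gauge_cone \<nu>)"
      using nn[of "-x"] by (simp add: zero_prod_def cone cone0)
  qed
  have NR: "\<forall>x. gauge_norm \<nu>\<^sub>1 (x, 0) = gauge_norm \<nu> x"
    using A0 by (simp add: gauge_norm_def conj_gauge_def)
  have PC: "proper_cone (gauge_cone \<nu>\<^sub>1)"
    unfolding proper_cone_def
  proof (intro conjI ballI allI impI)
    show "0 \<in> gauge_cone \<nu>\<^sub>1" using z by (simp add: zero_prod_def cone)
  next
    fix p q assume "p \<in> gauge_cone \<nu>\<^sub>1" "q \<in> gauge_cone \<nu>\<^sub>1"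
    moreover obtain x r y s where "p = (x,r)" "q = (y,s)" by (cases p, cases q)
    ultimately show "p + q \<in> gauge_cone \<nu>\<^sub>1"
      using sub[of "-x" "-y"] by (simp add: cone add.commute)
  next
    fix t :: real and p assume t: "0 \<le> t" and "p \<in> gauge_cone \<nu>\<^sub>1"
    moreover obtain x r where p: "p = (x,r)" by (cases p)
    ultimately have h: "\<nu> (-x) \<le> r" by (simp add: cone)
    show "t *\<^sub>R p \<in> gauge_cone \<nu>\<^sub>1"
    proof (cases "t = 0")
      case True then show ?thesis using z by (simp add: p cone)
    next
      case False then have "t > 0" using t by simp
      then show ?thesis using hom[of t "-x"] h
        by (simp add: p cone mult_left_mono)
    qed
  next
    fix p assume "p \<in> gauge_cone \<nu>\<^sub>1" "- p \<in> gauge_cone \<nu>\<^sub>1"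
    moreover obtain x r where p: "p = (x,r)" by (cases p)
    ultimately have "\<nu> (-x) \<le> r" "\<nu> x \<le> -r" by (auto simp: cone)
    then have "\<nu> x = 0" "\<nu> (-x) = 0" "r = 0" using nn[of x] nn[of "-x"] by auto
    then show "p = 0" using prp[of x] p by (auto simp: zero_prod_def)
  qed
  have OU: "\<forall>a. \<exists>t>0. cone_le (gauge_cone \<nu>\<^sub>1) (- (t *\<^sub>R (0, 1))) a \<and>
            cone_le (gauge_cone \<nu>\<^sub>1) a (t *\<^sub>R (0, 1))"
  proof
    fix a :: "'a \<times> real"
    obtain x r where a: "a = (x,r)" by (cases a)
    define t where "t = \<nu> (-x) + \<nu> x + \<bar>r\<bar> + 1"
    have "t > 0" using nn[of x] nn[of "-x"] unfolding t_def by linarith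
    moreover have "\<nu> (-x) \<le> r + t" "\<nu> x \<le> t - r"
      using nn[of x] nn[of "-x"] unfolding t_def by linarith+
    ultimately show "\<exists>t>0. cone_le (gauge_cone \<nu>\<^sub>1) (- (t *\<^sub>R (0, 1))) a \<and>
            cone_le (gauge_cone \<nu>\<^sub>1) a (t *\<^sub>R (0, 1))"
      by (intro exI[of _ t]) (simp add: cone_le_def a cone add.commute)
  qed
  have AR: "archimedean_unit (gauge_cone \<nu>\<^sub>1) (0, 1)"
    unfolding archimedean_unit_def
  proof (intro allI impI)
    fix a :: "'a \<times> real"
    obtain x r where a: "a = (x,r)" by (cases a)
    assume h: "\<forall>t>0. cone_le (gauge_cone \<nu>\<^sub>1) 0 (t *\<^sub>R (0, 1) + a)"
    have "\<forall>t>0. \<nu> (-x) \<le> r + t"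
    proof (intro allI impI)
      fix t :: real assume "t > 0"
      then show "\<nu> (-x) \<le> r + t" using h by (auto simp: cone_le_def a cone add.commute)
    qed
    then have "\<nu> (-x) \<le> r"
      by (metis add.commute field_le_epsilon)
    then show "cone_le (gauge_cone \<nu>\<^sub>1) 0 a" by (simp add: cone_le_def a cone)
  qed
  have INF: "\<forall>p. \<nu>\<^sub>1 p = Inf {t. t > 0 \<and> cone_le (gauge_cone \<nu>\<^sub>1) p (t *\<^sub>R (0, 1))}"
  proof
    fix p :: "'a \<times> real"
    obtain x r where p: "p = (x,r)" by (cases p)
    have S: "{t. t > 0 \<and> cone_le (gauge_cone \<nu>\<^sub>1) p (t *\<^sub>R (0, 1))} = {t. t > 0 \<and> \<nu> x + r \<le> t}"
      by (auto simp: cone_le_def p cone)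
    show "\<nu>\<^sub>1 p = Inf {t. t > 0 \<and> cone_le (gauge_cone \<nu>\<^sub>1) p (t *\<^sub>R (0, 1))}"
    proof (cases "\<nu> x + r > 0")
      case True
      then have "{t. t > 0 \<and> \<nu> x + r \<le> t} = {\<nu> x + r..}" by auto
      then show ?thesis using True unfolding S by (simp add: p N1)
    next
      case False
      then have "{t. t > 0 \<and> \<nu> x + r \<le> t} = {0<..}" by auto
      then show ?thesis using False unfolding S by (simp add: p N1)
    qed
  qed
  show ?thesis using G A0 OE NR PC OU AR INF
    by (simp add: AOU_space_def order_unit_space_def ordered_vector_space_def)
qed

end
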